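(* Let $f:\{0,1,\dots,N-1\}\to\{0,1\}$ and $t=|f^{-1}(1)|$. Let $\tilde t$ be any integer with $|\tilde t-t'|\le 2/3$, where $t'$ is the output of $\mathbf{Count}(f,\lceil\sqrt N\rceil)$. Then with probability at least $8/\pi^2$, $$|\tilde t-t|<2\pi\sqrt{\frac{t(N-t)}{N}}+11.$$
   Context: For $M\ge1$, $\mathbf F_M|x\rangle=\frac{1}{\sqrt M}\sum_{y=0}^{M-1}e^{2\pi ixy/M}|y\rangle$. For a unitary $\mathbf U$, $\Lambda_M(\mathbf U)$ is $|j\rangle|y\rangle\mapsto|j\rangle(\mathbf U^j|y\rangle)$, $0\le j<M$. Take $\mathcal H$ with basis $|0\rangle,\dots,|N-1\rangle$, $\mathcal A=\mathbf F_N$, $\mathbf S_f|x\rangle=(-1)^{f(x)}|x\rangle$, $\mathbf S_0$ negating $|0\rangle$ and fixing other basis states, and $\mathbf Q=-\mathcal A\mathbf S_0\mathcal A^{-1}\mathbf S_f$. $\mathbf{Count}(f,M)$: prepare $|0\rangle\otimes\mathcal A|0\rangle$ (first register $M$-dimensional); apply $\mathbf F_M$ to the first register; apply $\Lambda_M(\mathbf Q)$; apply $\mathbf F_M^{-1}$ to the first register; measure the first register obtaining $y$; output $t'=N\sin^2(\pi y/M)$. A call $\mathbf{Count}(f,M)$ is counted as $M$ evaluations of $f$. *)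

theory Defs
  imports Complex_Main
begin

text \<open>State vectors of a register of dimension d are functions nat => complex,
  only the entries at indices < d being meaningful (entries >= d are kept 0).
  Two-register states are functions nat => nat => complex: s j y is the amplitude
  of the basis state |j>|y>.\<close>

type_synonym vec = "nat \<Rightarrow> complex"
type_synonym vec2 = "nat \<Rightarrow> nat \<Rightarrow> complex"

definition QFT :: "nat \<Rightarrow> vec \<Rightarrow> vec" where
  "QFT M v = (\<lambda>y. if y < M then
      (\<Sum>x<M. complex_of_real (1 / sqrt (real M)) * cis (2 * pi * real x * real y / real M) * v x)
    else 0)"

definition QFT_inv :: "nat \<Rightarrow> vec \<Rightarrow> vec" where
  "QFT_inv M v = (\<lambda>y. if y < M then
      (\<Sum>x<M. complex_of_real (1 / sqrt (real M)) * cis (- 2 * pi * real x * real y / real M) * v x)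
    else 0)"

definition ket :: "nat \<Rightarrow> vec" where
  "ket k = (\<lambda>x. if x = k then 1 else 0)"

definition S_f :: "nat \<Rightarrow> (nat \<Rightarrow> nat) \<Rightarrow> vec \<Rightarrow> vec" where
  "S_f N f v = (\<lambda>x. if x < N then (-1) ^ f x * v x else 0)"

definition S_0 :: "nat \<Rightarrow> vec \<Rightarrow> vec" where
  "S_0 N v = (\<lambda>x. if x < N then (if x = 0 then - v x else v x) else 0)"

definition Qop :: "nat \<Rightarrow> (nat \<Rightarrow> nat) \<Rightarrow> vec \<Rightarrow> vec" where
  "Qop N f v = (\<lambda>x. - (QFT N (S_0 N (QFT_inv N (S_f N f v)))) x)"

definition count_init :: "nat \<Rightarrow> nat \<Rightarrow> vec2" where
  "count_init N M = (\<lambda>j y. if j = 0 then QFT N (ket 0) y else 0)"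

definition apply_first :: "(vec \<Rightarrow> vec) \<Rightarrow> vec2 \<Rightarrow> vec2" where
  "apply_first U s = (\<lambda>j y. U (\<lambda>j'. s j' y) j)"

definition Lambda :: "nat \<Rightarrow> (vec \<Rightarrow> vec) \<Rightarrow> vec2 \<Rightarrow> vec2" where
  "Lambda M U s = (\<lambda>j y. if j < M then (U ^^ j) (s j) y else 0)"

definition count_final :: "nat \<Rightarrow> (nat \<Rightarrow> nat) \<Rightarrow> nat \<Rightarrow> vec2" where
  "count_final N f M =
     apply_first (QFT_inv M) (Lambda M (Qop N f) (apply_first (QFT M) (count_init N M)))"

definition count_prob :: "nat \<Rightarrow> (nat \<Rightarrow> nat) \<Rightarrow> nat \<Rightarrow> nat \<Rightarrow> real" where
  "count_prob N f M y = (\<Sum>x<N. (cmod (count_final N f M y x))\<^sup>2)"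

definition count_output :: "nat \<Rightarrow> nat \<Rightarrow> nat \<Rightarrow> real" where
  "count_output N M y = real N * (sin (pi * real y / real M))\<^sup>2"

end

theory Submission
  imports Defs "HOL-Analysis.Complex_Transcendental"
begin


lemma cis_eq_1_int:
  assumes "cis a = 1" shows "\<exists>n::int. a = n * 2 * pi"
proof -
  have "cos a = 1" using assms by (metis Re_complex_of_real cis.sel(1) one_complex.sel(1))
  then show ?thesis using cos_one_2pi_int by blast
qed

lemma orth:
  assumes "x < N" "x' < N"
  shows "(\<Sum>y<N. cis (2*pi*real y*real x/real N) * cis (- 2*pi*real x'*real y/real N))
         = (if x = x' then of_nat N else 0)"
proof -
  define a where "a = 2*pi*(real x - real x')/real N"
  have N: "N > 0" using assms by auto
  have eq: "cis (2*pi*real y*real x/real N) * cis (- 2*pi*real x'*real y/real N) = cis a ^ y" for y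
    by (simp only: cis_mult Complex.DeMoivre a_def) (rule arg_cong[where f=cis], use N in \<open>simp add: field_simps\<close>)
  show ?thesis
  proof (cases "x = x'")
    case True
    then show ?thesis unfolding eq a_def by simp
  next
    case False
    have ne: "cis a \<noteq> 1"
    proof
      assume "cis a = 1"
      then obtain n :: int where n: "a = real_of_int n * 2 * pi" using cis_eq_1_int by blast
      then have "2*pi*(real x - real x') = 2*pi*(real_of_int n * real N)" using N unfolding a_def
        by (simp add: field_simps)
      then have "real x - real x' = real_of_int n * real N" by simp
      then have "real_of_int (int x - int x') = real_of_int (n * int N)" by simp
      then have h: "int x - int x' = n * int N" by linarith
      show False
      proof (cases "n = 0")
        case True then show False using h False by simp
      next
        case nz: False
        then have "\<bar>n * int N\<bar> \<ge> int N" by (simp add: abs_mult mult_le_cancel_right1; linarith)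
        then show False using h assms by linarith
      qed
    qed
    have "cis a ^ N = cis (2 * pi * (real_of_int (int x - int x')))"
      unfolding Complex.DeMoivre a_def using N by (intro arg_cong[where f=cis]) (simp add: field_simps)
    also have "\<dots> = 1" by (rule cis_multiple_2pi) simp
    finally have "cis a ^ N = 1" .
    then show ?thesis using False unfolding eq geometric_sum[OF ne] by simp
  qed
qed

lemma QFT_QFT_inv: "QFT N (QFT_inv N w) x = (if x < N then w x else 0)"
proof (cases "x < N")
  case True
  define c where "c = complex_of_real (1 / sqrt (real N))"
  have N: "N > 0" using True by auto
  have cc: "c * c = 1 / of_nat N" unfolding c_def using N
    by (simp flip: of_real_mult add: real_sqrt_mult[symmetric])
  have "QFT N (QFT_inv N w) x = (\<Sum>y<N. c * cis (2 * pi * real y * real x / real N) * QFT_inv N w y)"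
    unfolding QFT_def c_def using True by simp
  also have "\<dots> = (\<Sum>y<N. c * cis (2 * pi * real y * real x / real N) *
        (\<Sum>x'<N. c * cis (- 2 * pi * real x' * real y / real N) * w x'))"
    by (rule sum.cong) (auto simp: QFT_inv_def c_def)
  also have "\<dots> = (\<Sum>x'<N. c * c * w x' * (\<Sum>y<N. cis (2*pi*real y*real x/real N) * cis (- 2*pi*real x'*real y/real N)))"
  proof -
    have "(\<Sum>y<N. c * cis (2 * pi * real y * real x / real N) *
        (\<Sum>x'<N. c * cis (- 2 * pi * real x' * real y / real N) * w x')) =
       (\<Sum>y<N. \<Sum>x'<N. c * c * w x' * (cis (2*pi*real y*real x/real N) * cis (- 2*pi*real x'*real y/real N)))"
      by (simp add: sum_distrib_left mult_ac)
    also have "\<dots> = (\<Sum>x'<N. \<Sum>y<N. c * c * w x' * (cis (2*pi*real y*real x/real N) * cis (- 2*pi*real x'*real y/real N)))"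
      by (rule sum.swap)
    finally show ?thesis by (simp add: sum_distrib_left)
  qed
  also have "\<dots> = (\<Sum>x'<N. c * c * w x' * (if x = x' then of_nat N else 0))"
    by (rule sum.cong[OF refl]) (use orth[OF True] in auto)
  also have "\<dots> = w x" using True N cc by (simp add: if_distrib cong: if_cong)
  finally show ?thesis using True by simp
qed (simp add: QFT_def)



lemma csqrt_sq: "N > 0 \<Longrightarrow> complex_of_real (1 / sqrt (real N)) * complex_of_real (1 / sqrt (real N)) = 1 / of_nat N"
  by (simp flip: of_real_mult add: real_sqrt_mult[symmetric])

lemma QFT_S0:
  assumes N: "N \<ge> 1" and x: "x < N"
  shows "QFT N (S_0 N (QFT_inv N w)) x = w x - (2 / of_nat N) * (\<Sum>x'<N. w x')"
proof -
  define c where "c = complex_of_real (1 / sqrt (real N))"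
  define u where "u = QFT_inv N w"
  define a where "a = (\<lambda>y. c * cis (2 * pi * real y * real x / real N))"
  have u0: "u 0 = c * (\<Sum>x'<N. w x')" using N unfolding u_def QFT_inv_def c_def
    by (simp add: sum_distrib_left)
  have "QFT N (S_0 N u) x = (\<Sum>y<N. a y * S_0 N u y)"
    unfolding QFT_def a_def c_def using x by simp
  also have "\<dots> = (\<Sum>y<N. a y * u y - (if y = 0 then a y * (2 * u 0) else 0))"
    by (rule sum.cong) (auto simp: S_0_def algebra_simps)
  also have "\<dots> = (\<Sum>y<N. a y * u y) - a 0 * (2 * u 0)"
    using N by (simp add: sum_subtractf)
  also have "(\<Sum>y<N. a y * u y) = QFT N u x"
    unfolding QFT_def a_def c_def using x by simp
  also have "QFT N u x = w x" unfolding u_def QFT_QFT_inv using x by simp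
  also have "a 0 * (2 * u 0) = (2 / of_nat N) * (\<Sum>x'<N. w x')"
    unfolding u0 a_def using csqrt_sq[of N] N unfolding c_def by simp
  finally show ?thesis unfolding u_def .
qed

definition V :: "nat \<Rightarrow> (nat \<Rightarrow> nat) \<Rightarrow> complex \<Rightarrow> complex \<Rightarrow> nat \<Rightarrow> complex" where
  "V N f a b = (\<lambda>x. if x < N then (if f x = 1 then a else b) else 0)"

lemma sum_V:
  "(\<Sum>x<N. V N f a b x) = of_nat (card {x. x < N \<and> f x = 1}) * a
     + (of_nat N - of_nat (card {x. x < N \<and> f x = 1})) * b"
proof -
  have "(\<Sum>x<N. V N f a b x) = (\<Sum>x<N. if f x = 1 then a else b)"
    by (rule sum.cong) (auto simp: V_def)
  also have "\<dots> = of_nat (card ({..<N} \<inter> {x. f x = 1})) * a + of_nat (card ({..<N} \<inter> - {x. f x = 1})) * b"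
    by (simp add: sum.If_cases)
  also have "card ({..<N} \<inter> {x. f x = 1}) = card {x. x < N \<and> f x = 1}"
    by (rule arg_cong[where f=card]) auto
  also have "card ({..<N} \<inter> - {x. f x = 1}) = N - card {x. x < N \<and> f x = 1}"
  proof -
    have "{..<N} \<inter> - {x. f x = 1} = {..<N} - {x. x < N \<and> f x = 1}" by auto
    then show ?thesis by (simp only:) (subst card_Diff_subset, auto)
  qed
  also have "of_nat (N - card {x. x < N \<and> f x = 1}) = (of_nat N - of_nat (card {x. x < N \<and> f x = 1}) :: complex)"
  proof -
    have "card {x. x < N \<and> f x = 1} \<le> card {..<N}" by (rule card_mono) auto
    then show ?thesis by (simp add: of_nat_diff)
  qed
  finally show ?thesis .
qed

lemma Qop_V:
  assumes N: "N \<ge> 1" and f: "\<forall>x<N. f x \<in> {0, 1}"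
  defines "t \<equiv> of_nat (card {x. x < N \<and> f x = 1}) :: complex"
  shows "Qop N f (V N f a b) = V N f (a + (2 / of_nat N) * ((of_nat N - t) * b - t * a))
                                      ((2 / of_nat N) * ((of_nat N - t) * b - t * a) - b)"
proof
  fix x
  have Sf: "S_f N f (V N f a b) = V N f (- a) b"
  proof
    fix y show "S_f N f (V N f a b) y = V N f (- a) b y"
      using f by (cases "y < N") (auto simp: S_f_def V_def)
  qed
  show "Qop N f (V N f a b) x = V N f (a + (2 / of_nat N) * ((of_nat N - t) * b - t * a))
                                      ((2 / of_nat N) * ((of_nat N - t) * b - t * a) - b) x"
  proof (cases "x < N")
    case True
    show ?thesis unfolding Qop_def Sf QFT_S0[OF N True] sum_V t_def[symmetric]
      using True by (simp add: V_def algebra_simps)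
  next
    case False
    then show ?thesis by (simp add: Qop_def QFT_def V_def)
  qed
qed



fun ab :: "real \<Rightarrow> real \<Rightarrow> real \<Rightarrow> nat \<Rightarrow> real \<times> real" where
  "ab N t c 0 = (c, c)"
| "ab N t c (Suc j) = (let a = fst (ab N t c j); b = snd (ab N t c j); s = (2 / N) * ((N - t) * b - t * a)
     in (a + s, s - b))"

lemma Qpow_V:
  assumes N: "N \<ge> 1" and f: "\<forall>x<N. f x \<in> {0, 1}"
  defines "t \<equiv> real (card {x. x < N \<and> f x = 1})"
  shows "(Qop N f ^^ j) (V N f (of_real c) (of_real c)) =
         V N f (of_real (fst (ab (real N) t c j))) (of_real (snd (ab (real N) t c j)))"
proof (induction j)
  case 0
  then show ?case by simp
next
  case (Suc j)
  have t: "of_nat (card {x. x < N \<and> f x = 1}) = (of_real t :: complex)" unfolding t_def by simp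
  show ?case
    unfolding funpow.simps comp_def Suc Qop_V[OF N f] t
    by (simp add: Let_def)
qed

lemma Psi: "N \<ge> 1 \<Longrightarrow> QFT N (ket 0) = V N f (of_real (1 / sqrt (real N))) (of_real (1 / sqrt (real N)))"
  by (rule ext) (simp add: QFT_def V_def ket_def if_distrib cong: if_cong)

lemma count_final_eq:
  assumes N: "N \<ge> 1" and f: "\<forall>x<N. f x \<in> {0, 1}" and M: "M \<ge> 1" and y: "y < M"
  defines "t \<equiv> real (card {x. x < N \<and> f x = 1})"
  defines "c \<equiv> 1 / (sqrt (real M) * sqrt (real N))"
  shows "count_final N f M y x = (\<Sum>j<M. of_real (1 / sqrt (real M)) * cis (- 2 * pi * real j * real y / real M) *
           V N f (of_real (fst (ab (real N) t c j))) (of_real (snd (ab (real N) t c j))) x)"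
proof -
  define s1 where "s1 = apply_first (QFT M) (count_init N M)"
  have s1: "s1 j = V N f (of_real c) (of_real c)" if "j < M" for j
  proof
    fix z
    have "s1 j z = (\<Sum>x<M. of_real (1 / sqrt (real M)) * cis (2 * pi * real x * real j / real M) *
                     (if x = 0 then QFT N (ket 0) z else 0))"
      unfolding s1_def apply_first_def QFT_def count_init_def using that by simp
    also have "\<dots> = of_real (1 / sqrt (real M)) * QFT N (ket 0) z"
      using M by (simp add: if_distrib cong: if_cong)
    also have "\<dots> = V N f (of_real c) (of_real c) z"
      unfolding Psi[OF N, of f] c_def by (simp add: V_def)
    finally show "s1 j z = V N f (of_real c) (of_real c) z" .
  qed
  have "count_final N f M y x = QFT_inv M (\<lambda>j. Lambda M (Qop N f) s1 j x) y"
    unfolding count_final_def s1_def apply_first_def ..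
  also have "\<dots> = (\<Sum>j<M. of_real (1 / sqrt (real M)) * cis (- 2 * pi * real j * real y / real M) *
           Lambda M (Qop N f) s1 j x)"
    unfolding QFT_inv_def using y by simp
  also have "\<dots> = (\<Sum>j<M. of_real (1 / sqrt (real M)) * cis (- 2 * pi * real j * real y / real M) *
           V N f (of_real (fst (ab (real N) t c j))) (of_real (snd (ab (real N) t c j))) x)"
    by (rule sum.cong[OF refl]) (simp add: Lambda_def s1 Qpow_V[OF N f] t_def)
  finally show ?thesis .
qed



lemma ab_trig:
  assumes Nr: "Nr > 0" and t: "t = Nr * (sin th)\<^sup>2" and t2: "Nr - t = Nr * (cos th)\<^sup>2" and Kc: "K * c = 1"
  shows "K * sin th * fst (ab Nr t c j) = sin (real (2*j+1) * th) \<and>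
         K * cos th * snd (ab Nr t c j) = cos (real (2*j+1) * th)"
proof (induction j)
  case 0
  then show ?case using Kc by (simp add: mult.assoc mult.commute[of _ c])
next
  case (Suc j)
  define a where "a = fst (ab Nr t c j)"
  define b where "b = snd (ab Nr t c j)"
  define X where "X = real (2*j+1) * th"
  define s where "s = sin th"
  define co where "co = cos th"
  have IH1: "K * s * a = sin X" and IH2: "K * co * b = cos X"
    using Suc unfolding a_def b_def X_def s_def co_def by auto
  have X2: "real (2 * Suc j + 1) * th = X + 2 * th" unfolding X_def by (simp add: algebra_simps)
  have sc: "s\<^sup>2 + co\<^sup>2 = 1" unfolding s_def co_def by simp
  have tt: "t = Nr * s\<^sup>2" "Nr - t = Nr * co\<^sup>2" using t t2 unfolding s_def co_def by auto
  have e0: "(Nr - t) * b - t * a = Nr * co\<^sup>2 * b - Nr * s\<^sup>2 * a"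
    by (subst tt(2), subst tt(1), rule refl)
  have e1: "K * s * (a + 2 / Nr * ((Nr - t) * b - t * a)) = K * s * a + 2 * (s * co * (K * co * b) - s\<^sup>2 * (K * s * a))"
    using Nr unfolding e0 by (simp add: field_simps power2_eq_square)
  have e2: "K * co * (2 / Nr * ((Nr - t) * b - t * a) - b) = 2 * (co\<^sup>2 * (K * co * b) - s * co * (K * s * a)) - K * co * b"
    using Nr unfolding e0 by (simp add: field_simps power2_eq_square)
  have sX: "sin X = co * (co * sin X) + s * (s * sin X)"
  proof -
    have "sin X = (co * co + s * s) * sin X" using sc by (simp add: power2_eq_square)
    then show ?thesis by (simp add: algebra_simps)
  qed
  have S1: "K * s * (a + 2 / Nr * ((Nr - t) * b - t * a)) = sin (X + 2 * th)"
    unfolding e1 IH1 IH2 sin_add sin_double cos_double s_def[symmetric] co_def[symmetric]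
    using sc by (simp add: algebra_simps power2_eq_square) (use sX in linarith)
  have cX: "cos X = co * (co * cos X) + s * (s * cos X)"
  proof -
    have "cos X = (co * co + s * s) * cos X" using sc by (simp add: power2_eq_square)
    then show ?thesis by (simp add: algebra_simps)
  qed
  have S2: "K * co * (2 / Nr * ((Nr - t) * b - t * a) - b) = cos (X + 2 * th)"
    unfolding e2 IH1 IH2 cos_add sin_double cos_double s_def[symmetric] co_def[symmetric]
    using sc by (simp add: algebra_simps power2_eq_square) (use cX in linarith)
  show ?case using S1 S2 unfolding X2 by (simp add: Let_def a_def b_def s_def co_def)
qed



lemma sum_if_card:
  "(\<Sum>x<N. if f x = (1::nat) then \<alpha> else \<beta>) = of_nat (card {x. x < N \<and> f x = 1}) * \<alpha>
     + (of_nat N - of_nat (card {x. x < N \<and> f x = 1})) * (\<beta> :: 'a :: comm_ring_1)"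
proof -
  have "(\<Sum>x<N. if f x = 1 then \<alpha> else \<beta>) = of_nat (card ({..<N} \<inter> {x. f x = 1})) * \<alpha> + of_nat (card ({..<N} \<inter> - {x. f x = 1})) * \<beta>"
    by (simp add: sum.If_cases)
  also have "card ({..<N} \<inter> {x. f x = 1}) = card {x. x < N \<and> f x = 1}"
    by (rule arg_cong[where f=card]) auto
  also have "card ({..<N} \<inter> - {x. f x = 1}) = N - card {x. x < N \<and> f x = 1}"
  proof -
    have "{..<N} \<inter> - {x. f x = 1} = {..<N} - {x. x < N \<and> f x = 1}" by auto
    then show ?thesis by (simp only:) (subst card_Diff_subset, auto)
  qed
  also have "of_nat (N - card {x. x < N \<and> f x = 1}) = (of_nat N - of_nat (card {x. x < N \<and> f x = 1}) :: 'a)"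
  proof -
    have "card {x. x < N \<and> f x = 1} \<le> card {..<N}" by (rule card_mono) auto
    then show ?thesis by (simp add: of_nat_diff)
  qed
  finally show ?thesis .
qed

lemma card_le: "card {x. x < N \<and> f x = 1} \<le> N"
proof -
  have "card {x. x < N \<and> f x = 1} \<le> card {..<N}" by (rule card_mono) auto
  then show ?thesis by simp
qed

lemma prob_formula:
  assumes N: "N \<ge> 1" and f: "\<forall>x<N. f x \<in> {0, 1}" and M: "M \<ge> 1" and y: "y < M"
  defines "t \<equiv> real (card {x. x < N \<and> f x = 1})"
  defines "th \<equiv> arcsin (sqrt (t / real N))"
  shows "count_prob N f M y =
     (cmod (\<Sum>j<M. cis (- 2 * pi * real j * real y / real M) * of_real (sin (real (2*j+1) * th) / real M)))\<^sup>2
   + (cmod (\<Sum>j<M. cis (- 2 * pi * real j * real y / real M) * of_real (cos (real (2*j+1) * th) / real M)))\<^sup>2"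
proof -
  define K where "K = sqrt (real M) * sqrt (real N)"
  define c where "c = 1 / K"
  define a where "a = (\<lambda>j. fst (ab (real N) t c j))"
  define b where "b = (\<lambda>j. snd (ab (real N) t c j))"
  define e where "e = (\<lambda>j. cis (- 2 * pi * real j * real y / real M))"
  define F1 where "F1 = (\<Sum>j<M. of_real (1 / sqrt (real M)) * e j * of_real (a j))"
  define F0 where "F0 = (\<Sum>j<M. of_real (1 / sqrt (real M)) * e j * of_real (b j))"
  have tN: "t \<le> real N" "0 \<le> t" unfolding t_def using card_le[of N f] by auto
  have Npos: "real N > 0" using N by simp
  have s: "sin th = sqrt (t / real N)" unfolding th_def using tN Npos
    by (intro sin_arcsin) (auto simp: real_sqrt_le_1_iff intro: order_trans[of _ 0])
  have s2: "t = real N * (sin th)\<^sup>2" unfolding s using tN Npos by simp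
  have co2: "real N - t = real N * (cos th)\<^sup>2" using s2 by (simp add: cos_squared_eq algebra_simps)
  have Kc: "K * c = 1" unfolding c_def K_def using N M by simp
  have trig: "K * sin th * a j = sin (real (2*j+1) * th)" "K * cos th * b j = cos (real (2*j+1) * th)" for j
    using ab_trig[OF Npos s2 co2 Kc, of j] unfolding a_def b_def by auto
  have fin: "count_final N f M y x = V N f F1 F0 x" for x
    unfolding count_final_eq[OF N f M y] t_def[symmetric] c_def[symmetric] K_def[symmetric]
    by (simp add: V_def F1_def F0_def a_def b_def e_def)
  have "count_prob N f M y = (\<Sum>x<N. if f x = 1 then (cmod F1)\<^sup>2 else (cmod F0)\<^sup>2)"
    unfolding count_prob_def fin by (rule sum.cong) (auto simp: V_def)
  also have "\<dots> = t * (cmod F1)\<^sup>2 + (real N - t) * (cmod F0)\<^sup>2"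
    unfolding sum_if_card t_def by simp
  also have "t * (cmod F1)\<^sup>2 = (cmod (of_real (sqrt (real N) * sin th) * F1))\<^sup>2"
    using Npos by (simp add: s2 norm_mult power_mult_distrib del: of_real_mult)
  also have "(cmod (of_real (sqrt (real N) * sin th) * F1))\<^sup>2 = (cmod (\<Sum>j<M. e j * of_real (sin (real (2*j+1) * th) / real M)))\<^sup>2"
  proof -
    have "of_real (sqrt (real N) * sin th) * F1 = (\<Sum>j<M. e j * of_real (sin (real (2*j+1) * th) / real M))"
      unfolding F1_def sum_distrib_left
    proof (rule sum.cong[OF refl])
      fix j
      have "sqrt (real N) * sin th * (1 / sqrt (real M)) * a j = (K * sin th * a j) / real M"
        unfolding K_def using M by (simp add: field_simps)
      then have "sqrt (real N) * sin th * (1 / sqrt (real M)) * a j = sin (real (2*j+1) * th) / real M"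
        using trig(1)[of j] by simp
      then show "of_real (sqrt (real N) * sin th) * (of_real (1 / sqrt (real M)) * e j * of_real (a j))
            = e j * of_real (sin (real (2*j+1) * th) / real M)"
        by (metis (no_types, lifting) mult.assoc mult.commute of_real_mult)
    qed
    then show ?thesis by simp
  qed
  also have "(real N - t) * (cmod F0)\<^sup>2 = (cmod (of_real (sqrt (real N) * cos th) * F0))\<^sup>2"
    using Npos by (simp add: co2 norm_mult power_mult_distrib del: of_real_mult)
  also have "(cmod (of_real (sqrt (real N) * cos th) * F0))\<^sup>2 = (cmod (\<Sum>j<M. e j * of_real (cos (real (2*j+1) * th) / real M)))\<^sup>2"
  proof -
    have "of_real (sqrt (real N) * cos th) * F0 = (\<Sum>j<M. e j * of_real (cos (real (2*j+1) * th) / real M))"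
      unfolding F0_def sum_distrib_left
    proof (rule sum.cong[OF refl])
      fix j
      have "sqrt (real N) * cos th * (1 / sqrt (real M)) * b j = (K * cos th * b j) / real M"
        unfolding K_def using M by (simp add: field_simps)
      then have "sqrt (real N) * cos th * (1 / sqrt (real M)) * b j = cos (real (2*j+1) * th) / real M"
        using trig(2)[of j] by simp
      then show "of_real (sqrt (real N) * cos th) * (of_real (1 / sqrt (real M)) * e j * of_real (b j))
            = e j * of_real (cos (real (2*j+1) * th) / real M)"
        by (metis (no_types, lifting) mult.assoc mult.commute of_real_mult)
    qed
    then show ?thesis by simp
  qed
  finally show ?thesis unfolding e_def .
qed



definition Kf :: "nat \<Rightarrow> real \<Rightarrow> real" where
  "Kf M d = (cmod (\<Sum>j<M. cis (real j * d)))\<^sup>2 / (real M)\<^sup>2"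

lemma parallelogram_i: "(cmod (u + \<i> * v))\<^sup>2 + (cmod (u - \<i> * v))\<^sup>2 = 2 * (cmod u)\<^sup>2 + 2 * (cmod v)\<^sup>2"
  unfolding cmod_power2 by (simp add: power2_eq_square algebra_simps)

lemma cis_cos_sin: "complex_of_real (cos x) + \<i> * complex_of_real (sin x) = cis x"
  by (rule complex_eqI) simp_all

lemma cis_cos_sin': "complex_of_real (cos x) - \<i> * complex_of_real (sin x) = cis (- x)"
  by (rule complex_eqI) simp_all

lemma prob_Kf:
  fixes th :: real and M y :: nat
  assumes M: "M \<ge> 1"
  shows "(cmod (\<Sum>j<M. cis (- 2 * pi * real j * real y / real M) * of_real (sin (real (2*j+1) * th) / real M)))\<^sup>2
   + (cmod (\<Sum>j<M. cis (- 2 * pi * real j * real y / real M) * of_real (cos (real (2*j+1) * th) / real M)))\<^sup>2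
   = Kf M (2 * th - 2 * pi * real y / real M) / 2 + Kf M (- 2 * th - 2 * pi * real y / real M) / 2"
proof -
  define Ss where "Ss = (\<Sum>j<M. cis (- 2 * pi * real j * real y / real M) * of_real (sin (real (2*j+1) * th) / real M))"
  define Sc where "Sc = (\<Sum>j<M. cis (- 2 * pi * real j * real y / real M) * of_real (cos (real (2*j+1) * th) / real M))"
  have Mpos: "real M > 0" using M by simp
  have A: "Sc + \<i> * Ss = cis th / of_nat M * (\<Sum>j<M. cis (real j * (2 * th - 2 * pi * real y / real M)))"
  proof -
    have "Sc + \<i> * Ss = (\<Sum>j<M. cis (- 2 * pi * real j * real y / real M) *
        (of_real (cos (real (2*j+1) * th)) + \<i> * of_real (sin (real (2*j+1) * th))) / of_nat M)"
      unfolding Sc_def Ss_def sum_distrib_left sum.distrib[symmetric]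
      by (rule sum.cong[OF refl]) (simp add: field_simps)
    also have "\<dots> = (\<Sum>j<M. cis th / of_nat M * cis (real j * (2 * th - 2 * pi * real y / real M)))"
      unfolding cis_cos_sin
    proof (rule sum.cong[OF refl])
      fix j
      show "cis (- 2 * pi * real j * real y / real M) * cis (real (2 * j + 1) * th) / of_nat M =
         cis th / of_nat M * cis (real j * (2 * th - 2 * pi * real y / real M))"
        by (simp add: cis_mult field_simps; (rule arg_cong[where f=cis], simp add: field_simps)?)
    qed
    finally show ?thesis by (simp add: sum_distrib_left)
  qed
  have B: "Sc - \<i> * Ss = cis (- th) / of_nat M * (\<Sum>j<M. cis (real j * (- 2 * th - 2 * pi * real y / real M)))"
  proof -
    have "Sc - \<i> * Ss = (\<Sum>j<M. cis (- 2 * pi * real j * real y / real M) *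
        (of_real (cos (real (2*j+1) * th)) - \<i> * of_real (sin (real (2*j+1) * th))) / of_nat M)"
      unfolding Sc_def Ss_def sum_distrib_left sum_subtractf[symmetric]
      by (rule sum.cong[OF refl]) (simp add: field_simps)
    also have "\<dots> = (\<Sum>j<M. cis (- th) / of_nat M * cis (real j * (- 2 * th - 2 * pi * real y / real M)))"
      unfolding cis_cos_sin'
    proof (rule sum.cong[OF refl])
      fix j
      show "cis (- 2 * pi * real j * real y / real M) * cis (- (real (2 * j + 1) * th)) / of_nat M =
         cis (- th) / of_nat M * cis (real j * (- 2 * th - 2 * pi * real y / real M))"
        by (simp add: cis_mult field_simps; (rule arg_cong[where f=cis], simp add: field_simps)?)
    qed
    finally show ?thesis by (simp add: sum_distrib_left)
  qed
  have "2 * (cmod Sc)\<^sup>2 + 2 * (cmod Ss)\<^sup>2 = (cmod (Sc + \<i> * Ss))\<^sup>2 + (cmod (Sc - \<i> * Ss))\<^sup>2"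
    by (rule parallelogram_i[symmetric])
  also have "\<dots> = Kf M (2 * th - 2 * pi * real y / real M) + Kf M (- 2 * th - 2 * pi * real y / real M)"
    unfolding A B Kf_def norm_mult norm_divide using Mpos by (simp add: power_divide)
  finally show ?thesis unfolding Ss_def[symmetric] Sc_def[symmetric] by simp
qed



lemma Kf_nonneg: "Kf M d \<ge> 0" unfolding Kf_def by simp

lemma sin2_shift: "(sin (x + real_of_int k * pi))\<^sup>2 = (sin x)\<^sup>2"
proof -
  have "cos (2 * (x + real_of_int k * pi)) = cos (2 * x + 2 * pi * real_of_int k)"
    by (simp add: algebra_simps)
  also have "\<dots> = cos (2 * x)" unfolding cos_add by simp
  finally have "cos (2 * (x + real_of_int k * pi)) = cos (2 * x)" .
  then show ?thesis unfolding cos_double_sin by simp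
qed

lemma Kf_int: assumes "M \<ge> 1" shows "Kf M (2 * pi * real_of_int k) = 1"
proof -
  have "(\<Sum>j<M. cis (real j * (2 * pi * real_of_int k))) = (\<Sum>j<M. 1)"
  proof (rule sum.cong[OF refl])
    fix j
    have "cis (real j * (2 * pi * real_of_int k)) = cis (2 * pi * real_of_int (int j * k))"
      by (simp add: algebra_simps)
    also have "\<dots> = 1" by (rule cis_multiple_2pi) simp
    finally show "cis (real j * (2 * pi * real_of_int k)) = 1" .
  qed
  then show ?thesis unfolding Kf_def using assms by simp
qed

lemma Kf_one: "Kf 1 d = 1" unfolding Kf_def by simp

lemma cmod_cis_minus_1: "(cmod (cis a - 1))\<^sup>2 = 4 * (sin (a / 2))\<^sup>2"
proof -
  have "(cmod (cis a - 1))\<^sup>2 = (cos a - 1)\<^sup>2 + (sin a)\<^sup>2" unfolding cmod_power2 by simp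
  also have "\<dots> = 2 - 2 * cos a" by (simp add: power2_eq_square algebra_simps)
  also have "cos a = 1 - 2 * (sin (a / 2))\<^sup>2" using cos_double_sin[of "a/2"] by simp
  finally show ?thesis by simp
qed

lemma Kf_formula:
  assumes M: "M \<ge> 1" and s: "sin (d / 2) \<noteq> 0"
  shows "Kf M d = (sin (real M * d / 2))\<^sup>2 / ((real M)\<^sup>2 * (sin (d / 2))\<^sup>2)"
proof -
  have ne: "cis d \<noteq> 1"
  proof
    assume "cis d = 1"
    then have "(cmod (cis d - 1))\<^sup>2 = 0" by simp
    then show False using s unfolding cmod_cis_minus_1 by simp
  qed
  have "(\<Sum>j<M. cis (real j * d)) = (\<Sum>j<M. cis d ^ j)" by (simp add: Complex.DeMoivre)
  also have "\<dots> = (cis d ^ M - 1) / (cis d - 1)" by (rule geometric_sum[OF ne])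
  also have "cis d ^ M = cis (real M * d)" by (simp add: Complex.DeMoivre)
  finally have "(cmod (\<Sum>j<M. cis (real j * d)))\<^sup>2 = (cmod (cis (real M * d) - 1))\<^sup>2 / (cmod (cis d - 1))\<^sup>2"
    by (simp add: norm_divide power_divide)
  also have "\<dots> = (sin (real M * d / 2))\<^sup>2 / (sin (d / 2))\<^sup>2" unfolding cmod_cis_minus_1 by simp
  finally show ?thesis unfolding Kf_def by simp
qed



lemma sin_ge_cubic: fixes x :: real assumes "x \<ge> 0" shows "sin x \<ge> x - x ^ 3 / 6"
proof -
  have "\<bar>sin x - (\<Sum>m<3. sin_coeff m * x ^ m)\<bar> \<le> inverse (fact 3) * \<bar>x\<bar> ^ 3"
    by (rule Maclaurin_sin_bound)
  moreover have "(\<Sum>m<3. sin_coeff m * x ^ m) = x"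
    by (simp add: eval_nat_numeral sin_coeff_def)
  ultimately have "\<bar>sin x - x\<bar> \<le> x ^ 3 / 6" using assms by (simp add: eval_nat_numeral)
  then have "-(sin x - x) \<le> x ^ 3 / 6" by (rule abs_le_D2)
  then show ?thesis by linarith
qed

lemma cos_ge_quad: "cos (x::real) \<ge> 1 - x\<^sup>2 / 2"
proof -
  have "\<bar>sin (x / 2)\<bar> \<le> \<bar>x / 2\<bar>" by (rule abs_sin_x_le_abs_x)
  then have "(sin (x / 2))\<^sup>2 \<le> (x / 2)\<^sup>2"
    by (metis abs_ge_zero power2_abs power_mono)
  moreover have "cos x = 1 - 2 * (sin (x / 2))\<^sup>2" using cos_double_sin[of "x/2"] by simp
  ultimately show ?thesis by (simp add: power_divide)
qed

lemma pi_bounds: "3.14159 \<le> pi" "pi \<le> 3.1416"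
  using pi_approx by simp_all

lemma key_cos:
  assumes v0: "0 \<le> v" and v1: "v \<le> 1/2"
  shows "(cos (pi * v))\<^sup>2 * (1 + 4 * v\<^sup>2) \<ge> (1 - 4 * v\<^sup>2)\<^sup>2"
proof (cases "v \<le> 51/200")
  case True
  define p where "p = pi\<^sup>2 / 2"
  define w where "w = v\<^sup>2"
  have w0: "0 \<le> w" unfolding w_def by simp
  have sq: "(51/200::real)\<^sup>2 = 2601/40000" by (simp add: power2_eq_square)
  have w1: "w \<le> 2601/40000" unfolding w_def sq[symmetric] using True v0 by (intro power_mono) auto
  have p1: "p \<le> 4.935"
  proof -
    have "pi * pi \<le> 3.1416 * 3.1416" using pi_bounds by (intro mult_mono) auto
    moreover have "(3.1416::real) * 3.1416 \<le> 9.8697" by simp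
    ultimately have "pi * pi \<le> 9.8697" by linarith
    then show ?thesis unfolding p_def by (simp add: power2_eq_square)
  qed
  have p0: "p \<ge> 0" unfolding p_def by simp
  have pw: "p * w \<le> 1"
  proof -
    have "p * w \<le> 4.935 * (2601/40000)" using p1 w1 w0 by (intro mult_mono) auto
    then show ?thesis by simp
  qed
  have c: "cos (pi * v) \<ge> 1 - p * w"
    using cos_ge_quad[of "pi * v"] unfolding p_def w_def by (simp add: power_mult_distrib)
  have c2: "(cos (pi * v))\<^sup>2 \<ge> (1 - p * w)\<^sup>2" using c pw by (intro power_mono) auto
  have iden: "(1 - p * w)\<^sup>2 * (1 + 4 * w) - (1 - 4 * w)\<^sup>2 = w * ((12 - 2 * p) + ((p - 4)\<^sup>2 - 32) * w + 4 * p\<^sup>2 * w\<^sup>2)"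
    by (simp add: power2_eq_square algebra_simps)
  have "(p - 4)\<^sup>2 * w \<ge> 0" using w0 by simp
  moreover have "4 * p\<^sup>2 * w\<^sup>2 \<ge> 0" by simp
  ultimately have "(12 - 2 * p) + ((p - 4)\<^sup>2 - 32) * w + 4 * p\<^sup>2 * w\<^sup>2 \<ge> 0"
    using p1 w1 by (simp add: algebra_simps power2_eq_square)
  then have "(1 - p * w)\<^sup>2 * (1 + 4 * w) \<ge> (1 - 4 * w)\<^sup>2" using iden w0
    by (metis diff_ge_0_iff_ge mult_nonneg_nonneg)
  moreover have "(cos (pi * v))\<^sup>2 * (1 + 4 * w) \<ge> (1 - p * w)\<^sup>2 * (1 + 4 * w)"
    using c2 w0 by (intro mult_right_mono) auto
  ultimately show ?thesis unfolding w_def by linarith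
next
  case False
  define u where "u = 1/2 - v"
  have u0: "0 \<le> u" and u1: "u \<le> 49/200" unfolding u_def using v1 False by auto
  define A where "A = pi - pi ^ 3 * u\<^sup>2 / 6"
  have cs: "cos (pi * v) = sin (pi * u)" unfolding u_def
    by (simp add: right_diff_distrib sin_diff)
  have sA: "sin (pi * u) \<ge> u * A"
    using sin_ge_cubic[of "pi * u"] u0 unfolding A_def by (simp add: power_mult_distrib algebra_simps power2_eq_square power3_eq_cube)
  have pi3: "pi ^ 3 \<le> 31.01"
  proof -
    have "pi ^ 3 \<le> 3.1416 ^ 3" using pi_bounds by (intro power_mono) auto
    moreover have "(3.1416::real) ^ 3 \<le> 31.01" by (simp add: power3_eq_cube)
    ultimately show ?thesis by linarith
  qed
  have sq2: "(49/200::real)\<^sup>2 = 2401/40000" by (simp add: power2_eq_square)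
  have "u\<^sup>2 \<le> 2401/40000" unfolding sq2[symmetric] using u0 u1 by (intro power_mono) auto
  then have "pi ^ 3 * u\<^sup>2 \<le> 31.01 * (2401/40000)"
    using pi3 by (intro mult_mono) auto
  then have A1: "A \<ge> 2.83" unfolding A_def using pi_bounds by simp
  then have A2: "A\<^sup>2 \<ge> 8"
  proof -
    have "2.83\<^sup>2 \<le> A\<^sup>2" using A1 by (intro power_mono) auto
    moreover have "(8::real) \<le> 2.83\<^sup>2" by (simp add: power2_eq_square)
    ultimately show ?thesis by linarith
  qed
  have "(cos (pi * v))\<^sup>2 \<ge> (u * A)\<^sup>2" unfolding cs using sA u0 A1 by (intro power_mono) auto
  also have "(u * A)\<^sup>2 = u\<^sup>2 * A\<^sup>2" by (simp add: power_mult_distrib)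
  finally have c1: "(cos (pi * v))\<^sup>2 \<ge> u\<^sup>2 * A\<^sup>2" .
  have "u\<^sup>2 * 8 \<le> u\<^sup>2 * A\<^sup>2" by (rule mult_left_mono[OF A2]) simp
  with c1 have c2: "(cos (pi * v))\<^sup>2 \<ge> 8 * u\<^sup>2" by linarith
  have e1: "1 + 4 * v\<^sup>2 = 2 * (1 - u)\<^sup>2 + 2 * u\<^sup>2" unfolding u_def by (simp add: power2_eq_square algebra_simps)
  have e2: "1 - 4 * v\<^sup>2 = 4 * u * (1 - u)" unfolding u_def by (simp add: power2_eq_square algebra_simps)
  have "(cos (pi * v))\<^sup>2 * (1 + 4 * v\<^sup>2) \<ge> 8 * u\<^sup>2 * (2 * (1 - u)\<^sup>2)"
    unfolding e1 using c2 by (intro mult_mono) auto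
  also have "8 * u\<^sup>2 * (2 * (1 - u)\<^sup>2) = (1 - 4 * v\<^sup>2)\<^sup>2" unfolding e2 by (simp add: power2_eq_square algebra_simps)
  finally show ?thesis .
qed

lemma key_ineq:
  assumes r0: "0 < r" and r1: "r < 1"
  shows "(sin (pi * r))\<^sup>2 / r\<^sup>2 + (sin (pi * r))\<^sup>2 / (1 - r)\<^sup>2 \<ge> 8"
proof -
  define u where "u = 1/2 - r"
  define v where "v = \<bar>u\<bar>"
  have v0: "0 \<le> v" and v1: "v \<le> 1/2" unfolding v_def u_def using r0 r1 by (cases "r \<le> 1/2"; simp)+
  have s: "(sin (pi * r))\<^sup>2 = (cos (pi * v))\<^sup>2"
  proof -
    have "sin (pi * r) = cos (pi * u)" unfolding u_def by (simp add: right_diff_distrib cos_diff)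
    moreover have "cos (pi * u) = cos (pi * v)" unfolding v_def by (cases "u \<ge> 0") auto
    ultimately show ?thesis by simp
  qed
  have vu: "v\<^sup>2 = u\<^sup>2" unfolding v_def by simp
  have k: "(cos (pi * v))\<^sup>2 * (1 + 4 * v\<^sup>2) \<ge> (1 - 4 * v\<^sup>2)\<^sup>2" by (rule key_cos[OF v0 v1])
  have e1: "r\<^sup>2 + (1 - r)\<^sup>2 = (1 + 4 * v\<^sup>2) / 2" unfolding vu u_def by (simp add: power2_eq_square algebra_simps)
  have e2: "r * (1 - r) = (1 - 4 * v\<^sup>2) / 4" unfolding vu u_def by (simp add: power2_eq_square algebra_simps)
  have rr: "r * (1 - r) > 0" using r0 r1 by simp
  have pos: "(1 - 4 * v\<^sup>2)\<^sup>2 > 0" using rr e2 by simp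
  have gen: "X / r\<^sup>2 + X / q\<^sup>2 = X * (r\<^sup>2 + q\<^sup>2) / (r * q)\<^sup>2" if "q \<noteq> 0" for X q
    using r0 that by (simp add: field_simps power2_eq_square)
  have "(sin (pi * r))\<^sup>2 / r\<^sup>2 + (sin (pi * r))\<^sup>2 / (1 - r)\<^sup>2 = (sin (pi * r))\<^sup>2 * (r\<^sup>2 + (1 - r)\<^sup>2) / (r * (1 - r))\<^sup>2"
    using r1 by (intro gen) simp
  also have "\<dots> = 8 * ((cos (pi * v))\<^sup>2 * (1 + 4 * v\<^sup>2)) / (1 - 4 * v\<^sup>2)\<^sup>2"
    unfolding s e1 e2 using pos by (simp add: power_divide field_simps)
  also have "\<dots> \<ge> 8"
  proof -
    show ?thesis using k pos by (simp add: le_divide_eq)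
  qed
  finally show ?thesis .
qed



lemma Kf_lower:
  assumes M: "M \<ge> 1" and a0: "0 < a" and a1: "a < 1"
    and sd: "(sin (d / 2))\<^sup>2 = (sin (pi * a / real M))\<^sup>2"
    and sMd: "(sin (real M * d / 2))\<^sup>2 = S"
  shows "Kf M d \<ge> S / (pi\<^sup>2 * a\<^sup>2)"
proof -
  have Mpos: "real M > 0" using M by simp
  have x0: "0 < pi * a / real M" using a0 Mpos by simp
  have x1: "pi * a / real M < pi" using a1 M Mpos by (simp add: field_simps)
  have sp: "sin (pi * a / real M) > 0" using sin_gt_zero[OF x0 x1] .
  have sle: "sin (pi * a / real M) \<le> pi * a / real M" using sin_x_le_x x0 by simp
  have "sin (d / 2) \<noteq> 0" using sd sp by (metis power_zero_numeral zero_less_power2 less_irrefl)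
  then have "Kf M d = S / ((real M)\<^sup>2 * (sin (pi * a / real M))\<^sup>2)"
    using Kf_formula[OF M] sd sMd by simp
  also have "\<dots> \<ge> S / (pi\<^sup>2 * a\<^sup>2)"
  proof (rule divide_left_mono)
    show "0 \<le> S" using sMd by (metis zero_le_power2)
    have "(sin (pi * a / real M))\<^sup>2 \<le> (pi * a / real M)\<^sup>2" using sp sle by (intro power_mono) auto
    then have "(real M)\<^sup>2 * (sin (pi * a / real M))\<^sup>2 \<le> (real M)\<^sup>2 * (pi * a / real M)\<^sup>2"
      by (intro mult_left_mono) auto
    also have "\<dots> = pi\<^sup>2 * a\<^sup>2" using Mpos by (simp add: power_divide power_mult_distrib)
    finally show "(real M)\<^sup>2 * (sin (pi * a / real M))\<^sup>2 \<le> pi\<^sup>2 * a\<^sup>2" .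
    show "0 < pi\<^sup>2 * a\<^sup>2 * ((real M)\<^sup>2 * (sin (pi * a / real M))\<^sup>2)" using Mpos sp a0 by simp
  qed
  finally show ?thesis .
qed

lemma pi_sq_ge_8: "8 / pi\<^sup>2 \<le> 1"
proof -
  have "pi * pi \<ge> 3 * 3" using pi_gt3 by (intro mult_mono) auto
  then show ?thesis by (simp add: power2_eq_square)
qed

lemma KL:
  assumes M: "M \<ge> 1"
  shows "\<exists>C. C \<subseteq> {y. y < M \<and> (\<exists>k::int. \<bar>real y / real M - w - real_of_int k\<bar> < 1 / real M)} \<and>
             (\<Sum>y\<in>C. Kf M (2 * pi * (w - real y / real M))) \<ge> 8 / pi\<^sup>2"
proof -
  have Mpos: "real M > 0" using M by simp
  define m where "m = \<lfloor>real M * w\<rfloor>"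
  define r where "r = real M * w - real_of_int m"
  have r0: "0 \<le> r" and r1: "r < 1" unfolding r_def m_def by linarith+
  define q1 where "q1 = m div int M"
  define y1 where "y1 = nat (m mod int M)"
  define q2 where "q2 = (m + 1) div int M"
  define y2 where "y2 = nat ((m + 1) mod int M)"
  have y1M: "y1 < M" unfolding y1_def using M by (simp add: nat_less_iff)
  have y2M: "y2 < M" unfolding y2_def using M by (simp add: nat_less_iff)
  have ry1: "real y1 = real_of_int m - real M * real_of_int q1"
  proof -
    have "int y1 = m mod int M" unfolding y1_def using M by simp
    also have "\<dots> = m - int M * q1" unfolding q1_def by (metis minus_div_mult_eq_mod mult.commute)
    finally have "int y1 = m - int M * q1" .
    then show ?thesis by (metis of_int_diff of_int_mult of_int_of_nat_eq)
  qed
  have ry2: "real y2 = real_of_int m + 1 - real M * real_of_int q2"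
  proof -
    have "int y2 = (m + 1) mod int M" unfolding y2_def using M by simp
    also have "\<dots> = (m + 1) - int M * q2" unfolding q2_def by (metis minus_div_mult_eq_mod mult.commute)
    finally have "int y2 = (m + 1) - int M * q2" .
    then show ?thesis by (metis of_int_add of_int_diff of_int_mult of_int_of_nat_eq of_int_1)
  qed
  have wy1: "w - real y1 / real M = r / real M + real_of_int q1"
    unfolding ry1 r_def using Mpos by (simp add: field_simps)
  have wy2: "w - real y2 / real M = (r - 1) / real M + real_of_int q2"
    unfolding ry2 r_def using Mpos by (simp add: field_simps)
  have y1S: "y1 \<in> {y. y < M \<and> (\<exists>k::int. \<bar>real y / real M - w - real_of_int k\<bar> < 1 / real M)}"
  proof -
    have e: "real y1 / real M - w - real_of_int (- q1) = - (r / real M)" using wy1 by simp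
    have "\<bar>real y1 / real M - w - real_of_int (- q1)\<bar> = r / real M"
      unfolding e using r0 Mpos by simp
    also have "\<dots> < 1 / real M" using r1 Mpos by (simp add: divide_strict_right_mono)
    finally show ?thesis using y1M by blast
  qed
  show ?thesis
  proof (cases "r = 0 \<or> M = 1")
    case True
    have "Kf M (2 * pi * (w - real y1 / real M)) = 1"
    proof (cases "M = 1")
      case True then show ?thesis by (simp add: Kf_def)
    next
      case False
      then have "r = 0" using \<open>r = 0 \<or> M = 1\<close> by simp
      then show ?thesis unfolding wy1 using Kf_int[OF M] by simp
    qed
    then show ?thesis using y1S pi_sq_ge_8 by (intro exI[of _ "{y1}"]) auto
  next
    case False
    then have rp: "0 < r" and M2: "M \<ge> 2" using r0 M by auto
    have ne: "y1 \<noteq> y2"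
    proof
      assume "y1 = y2"
      then have "m mod int M = (m + 1) mod int M" unfolding y1_def y2_def
        using M by (simp add: nat_eq_iff)
      then have "int M dvd (m + 1) - m" by (metis mod_eq_dvd_iff)
      then have "int M dvd 1" by simp
      then show False using M2 by simp
    qed
    have y2S: "y2 \<in> {y. y < M \<and> (\<exists>k::int. \<bar>real y / real M - w - real_of_int k\<bar> < 1 / real M)}"
    proof -
      have e0: "(1 - r) / real M = - ((r - 1) / real M)" by (metis minus_diff_eq minus_divide_left)
      have e: "real y2 / real M - w - real_of_int (- q2) = (1 - r) / real M" unfolding e0 using wy2 by simp
      have "\<bar>real y2 / real M - w - real_of_int (- q2)\<bar> = (1 - r) / real M"
        unfolding e using r1 Mpos by simp
      also have "\<dots> < 1 / real M" using rp Mpos by (simp add: divide_strict_right_mono)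
      finally show ?thesis using y2M by blast
    qed
    have K1: "Kf M (2 * pi * (w - real y1 / real M)) \<ge> (sin (pi * r))\<^sup>2 / (pi\<^sup>2 * r\<^sup>2)"
    proof (rule Kf_lower[OF M rp r1])
      have arg: "2 * pi * (r / real M + real_of_int q1) / 2 = pi * r / real M + real_of_int q1 * pi"
        by (simp add: algebra_simps)
      show "(sin (2 * pi * (w - real y1 / real M) / 2))\<^sup>2 = (sin (pi * r / real M))\<^sup>2"
        unfolding wy1 arg sin2_shift ..
      have arg2: "real M * (2 * pi * (r / real M + real_of_int q1)) / 2 = pi * r + real_of_int (int M * q1) * pi"
        using Mpos by (simp add: field_simps)
      show "(sin (real M * (2 * pi * (w - real y1 / real M)) / 2))\<^sup>2 = (sin (pi * r))\<^sup>2"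
        unfolding wy1 arg2 sin2_shift ..
    qed
    have K2: "Kf M (2 * pi * (w - real y2 / real M)) \<ge> (sin (pi * r))\<^sup>2 / (pi\<^sup>2 * (1 - r)\<^sup>2)"
    proof (rule Kf_lower[OF M])
      show "0 < 1 - r" "1 - r < 1" using rp r1 by auto
      have "(sin (2 * pi * (w - real y2 / real M) / 2))\<^sup>2 = (sin (pi * (r - 1) / real M))\<^sup>2"
      proof -
        have arg: "2 * pi * ((r - 1) / real M + real_of_int q2) / 2 = pi * (r - 1) / real M + real_of_int q2 * pi"
          by (simp add: algebra_simps)
        show ?thesis unfolding wy2 arg sin2_shift ..
      qed
      also have "\<dots> = (sin (pi * (1 - r) / real M))\<^sup>2"
      proof -
        have "pi * (r - 1) / real M = - (pi * (1 - r) / real M)" by (simp add: minus_divide_left algebra_simps)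
        then show ?thesis by simp
      qed
      finally show "(sin (2 * pi * (w - real y2 / real M) / 2))\<^sup>2 = (sin (pi * (1 - r) / real M))\<^sup>2" .
      have "(sin (real M * (2 * pi * (w - real y2 / real M)) / 2))\<^sup>2 = (sin (pi * r + real_of_int (int M * q2 - 1) * pi))\<^sup>2"
        unfolding wy2 using Mpos by (intro arg_cong[where f="\<lambda>x. (sin x)\<^sup>2"]) (simp add: field_simps)
      also have "\<dots> = (sin (pi * r))\<^sup>2" by (rule sin2_shift)
      finally show "(sin (real M * (2 * pi * (w - real y2 / real M)) / 2))\<^sup>2 = (sin (pi * r))\<^sup>2" .
    qed
    have "8 / pi\<^sup>2 \<le> ((sin (pi * r))\<^sup>2 / r\<^sup>2 + (sin (pi * r))\<^sup>2 / (1 - r)\<^sup>2) / pi\<^sup>2"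
      using key_ineq[OF rp r1] by (simp add: divide_right_mono)
    also have "\<dots> = (sin (pi * r))\<^sup>2 / (pi\<^sup>2 * r\<^sup>2) + (sin (pi * r))\<^sup>2 / (pi\<^sup>2 * (1 - r)\<^sup>2)"
      by (simp add: field_simps)
    also have "\<dots> \<le> Kf M (2 * pi * (w - real y1 / real M)) + Kf M (2 * pi * (w - real y2 / real M))"
      using K1 K2 by linarith
    also have "\<dots> = (\<Sum>y\<in>{y1, y2}. Kf M (2 * pi * (w - real y / real M)))"
      using ne by simp
    finally show ?thesis using y1S y2S by (intro exI[of _ "{y1, y2}"]) auto
  qed
qed



lemma sin2_diff_bound: fixes a d :: real shows "\<bar>(sin (a + d))\<^sup>2 - (sin a)\<^sup>2\<bar> \<le> \<bar>sin (2 * a)\<bar> * \<bar>d\<bar> + d\<^sup>2"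
proof -
  have id: "(sin (a + d))\<^sup>2 - (sin a)\<^sup>2 = sin (2 * a + d) * sin d"
  proof -
    have "sin (2 * a + d) * sin d = (cos (2 * a) - cos (2 * a + 2 * d)) / 2"
      by (simp add: sin_times_sin algebra_simps)
    also have "\<dots> = (sin (a + d))\<^sup>2 - (sin a)\<^sup>2"
    proof -
      have "cos (2 * a + 2 * d) = 1 - 2 * (sin (a + d))\<^sup>2" using cos_double_sin[of "a+d"] by (simp add: distrib_left)
      moreover have "cos (2 * a) = 1 - 2 * (sin a)\<^sup>2" using cos_double_sin[of a] by simp
      ultimately show ?thesis by (simp add: field_simps)
    qed
    finally show ?thesis by simp
  qed
  have b1: "\<bar>sin (2 * a + d)\<bar> \<le> \<bar>sin (2 * a)\<bar> + \<bar>d\<bar>"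
  proof -
    have "\<bar>sin (2 * a + d)\<bar> \<le> \<bar>sin (2 * a) * cos d\<bar> + \<bar>cos (2 * a) * sin d\<bar>"
      unfolding sin_add by (rule abs_triangle_ineq)
    also have "\<bar>sin (2 * a) * cos d\<bar> \<le> \<bar>sin (2 * a)\<bar>"
      by (simp add: abs_mult mult_left_le)
    also have "\<bar>cos (2 * a) * sin d\<bar> \<le> \<bar>d\<bar>"
    proof -
      have "\<bar>cos (2 * a) * sin d\<bar> \<le> \<bar>sin d\<bar>" by (simp add: abs_mult mult_left_le_one_le)
      then show ?thesis using abs_sin_x_le_abs_x[of d] by linarith
    qed
    finally show ?thesis by simp
  qed
  have "\<bar>(sin (a + d))\<^sup>2 - (sin a)\<^sup>2\<bar> = \<bar>sin (2 * a + d)\<bar> * \<bar>sin d\<bar>" unfolding id abs_mult ..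
  also have "\<dots> \<le> (\<bar>sin (2 * a)\<bar> + \<bar>d\<bar>) * \<bar>d\<bar>"
    using b1 abs_sin_x_le_abs_x[of d] by (intro mult_mono) auto
  also have "\<dots> = \<bar>sin (2 * a)\<bar> * \<bar>d\<bar> + d\<^sup>2" by (simp add: algebra_simps power2_eq_square)
  finally show ?thesis .
qed

lemma err_bound:
  assumes N: "N \<ge> 1" and M: "M \<ge> 1" and MN: "real N \<le> (real M)\<^sup>2"
    and t0: "0 \<le> t" and tN: "t \<le> real N"
    and th: "th = arcsin (sqrt (t / real N))"
    and w: "w = th / pi \<or> w = - th / pi"
    and k: "\<bar>real y / real M - w - real_of_int k\<bar> < 1 / real M"
  shows "\<bar>count_output N M y - t\<bar> \<le> 2 * pi * sqrt (t * (real N - t) / real N) + pi\<^sup>2"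
proof -
  have Npos: "real N > 0" and Mpos: "real M > 0" using N M by auto
  define d where "d = pi * (real y / real M - w - real_of_int k)"
  have dM: "\<bar>d\<bar> \<le> pi / real M"
  proof -
    have "\<bar>d\<bar> = pi * \<bar>real y / real M - w - real_of_int k\<bar>" unfolding d_def by (simp add: abs_mult)
    also have "\<dots> \<le> pi * (1 / real M)" using k by (intro mult_left_mono) auto
    finally show ?thesis by simp
  qed
  have "\<exists>d'. \<bar>d'\<bar> = \<bar>d\<bar> \<and> (sin (pi * real y / real M))\<^sup>2 = (sin (th + d'))\<^sup>2"
  proof -
    have "(sin (pi * real y / real M))\<^sup>2 = (sin ((pi * w + d) + real_of_int k * pi))\<^sup>2"
      unfolding d_def by (simp add: algebra_simps)
    also have "\<dots> = (sin (pi * w + d))\<^sup>2" by (rule sin2_shift)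
    finally have e: "(sin (pi * real y / real M))\<^sup>2 = (sin (pi * w + d))\<^sup>2" .
    show ?thesis
    proof (cases "w = th / pi")
      case True
      then show ?thesis using e by (intro exI[of _ d]) simp
    next
      case False
      then have "w = - th / pi" using w by simp
      then have "pi * w + d = - (th + (- d))" by simp
      then have "(sin (pi * w + d))\<^sup>2 = (sin (th + (- d)))\<^sup>2" by (simp only: sin_minus power2_minus)
      then show ?thesis using e by (intro exI[of _ "- d"]) simp
    qed
  qed
  then obtain d' where d': "\<bar>d'\<bar> = \<bar>d\<bar>" "(sin (pi * real y / real M))\<^sup>2 = (sin (th + d'))\<^sup>2" by blast
  have x0: "0 \<le> sqrt (t / real N)" and x1: "sqrt (t / real N) \<le> 1"
    using t0 tN Npos by (auto simp: real_sqrt_le_1_iff)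
  have s: "sin th = sqrt (t / real N)" unfolding th using x0 x1 by (intro sin_arcsin) (auto intro: order_trans[of _ 0])
  have s2: "(sin th)\<^sup>2 = t / real N" unfolding s using t0 Npos by simp
  have c: "cos th = sqrt (1 - t / real N)"
  proof -
    have "cos th = sqrt (1 - (sqrt (t / real N))\<^sup>2)" unfolding th using x0 x1
      by (intro cos_arcsin) (auto intro: order_trans[of _ 0])
    then show ?thesis using t0 Npos by simp
  qed
  have sc: "real N * \<bar>sin (2 * th)\<bar> = 2 * sqrt (t * (real N - t))"
  proof -
    have "\<bar>sin (2 * th)\<bar> = 2 * sqrt (t / real N) * sqrt (1 - t / real N)"
      unfolding sin_double s c using x0 tN Npos by (simp add: abs_mult)
    also have "\<dots> = 2 * sqrt (t * (real N - t) / (real N)\<^sup>2)"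
      using Npos by (simp add: real_sqrt_mult[symmetric] field_simps power2_eq_square)
    also have "\<dots> = 2 * sqrt (t * (real N - t)) / real N"
      using Npos by (simp add: real_sqrt_divide)
    finally show ?thesis using Npos by simp
  qed
  have "\<bar>count_output N M y - t\<bar> = real N * \<bar>(sin (th + d'))\<^sup>2 - (sin th)\<^sup>2\<bar>"
  proof -
    define X where "X = (sin (pi * real y / real M))\<^sup>2"
    have "real N * (X - t / real N) = real N * X - t" using Npos by (simp add: field_simps)
    then have "\<bar>real N * X - t\<bar> = real N * \<bar>X - t / real N\<bar>" using Npos
      by (metis abs_mult abs_of_nonneg less_imp_le)
    then show ?thesis unfolding count_output_def d'(2)[symmetric] s2 X_def by simp
  qed
  also have "\<dots> \<le> real N * (\<bar>sin (2 * th)\<bar> * \<bar>d'\<bar> + d'\<^sup>2)"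
    using sin2_diff_bound Npos by (intro mult_left_mono) auto
  also have "\<dots> = (real N * \<bar>sin (2 * th)\<bar>) * \<bar>d'\<bar> + real N * d'\<^sup>2"
    by (simp add: algebra_simps)
  also have "\<dots> = 2 * sqrt (t * (real N - t)) * \<bar>d\<bar> + real N * d\<^sup>2"
  proof -
    have dd: "d'\<^sup>2 = d\<^sup>2" using d'(1) by (metis power2_abs)
    show ?thesis unfolding sc d'(1) dd ..
  qed
  also have "\<dots> \<le> 2 * pi * sqrt (t * (real N - t) / real N) + pi\<^sup>2"
  proof -
    have sqM: "sqrt (real N) \<le> real M" using MN Mpos by (metis abs_of_nonneg less_imp_le real_sqrt_abs real_sqrt_le_mono)
    have "2 * sqrt (t * (real N - t)) * \<bar>d\<bar> \<le> 2 * sqrt (t * (real N - t)) * (pi / real M)"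
      using dM t0 tN by (intro mult_left_mono) auto
    also have "\<dots> \<le> 2 * sqrt (t * (real N - t)) * (pi / sqrt (real N))"
      using sqM Npos Mpos t0 tN by (intro mult_left_mono divide_left_mono) auto
    also have "\<dots> = 2 * pi * sqrt (t * (real N - t) / real N)"
      by (simp add: real_sqrt_divide)
    finally have A: "2 * sqrt (t * (real N - t)) * \<bar>d\<bar> \<le> 2 * pi * sqrt (t * (real N - t) / real N)" .
    have "d\<^sup>2 \<le> (pi / real M)\<^sup>2" using dM by (metis abs_ge_zero power2_abs power_mono)
    then have "real N * d\<^sup>2 \<le> real N * (pi / real M)\<^sup>2" by (intro mult_left_mono) auto
    also have "\<dots> = pi\<^sup>2 * (real N / (real M)\<^sup>2)" by (simp add: power_divide)
    also have "\<dots> \<le> pi\<^sup>2 * 1" using MN Mpos by (intro mult_left_mono) auto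
    finally have B: "real N * d\<^sup>2 \<le> pi\<^sup>2" by simp
    show ?thesis using A B by linarith
  qed
  finally show ?thesis .
qed



theorem corollary1:
  fixes N :: nat and f :: "nat \<Rightarrow> nat" and tt :: "nat \<Rightarrow> int"
  assumes "N \<ge> 1"
    and "\<forall>x<N. f x \<in> {0, 1}"
    and "\<forall>y<nat \<lceil>sqrt (real N)\<rceil>.
           \<bar>real_of_int (tt y) - count_output N (nat \<lceil>sqrt (real N)\<rceil>) y\<bar> \<le> 2 / 3"
  shows "(\<Sum>y\<in>{y. y < nat \<lceil>sqrt (real N)\<rceil> \<and>
            \<bar>real_of_int (tt y) - real (card {x. x < N \<and> f x = 1})\<bar>
              < 2 * pi * sqrt (real (card {x. x < N \<and> f x = 1}) * (real N - real (card {x. x < N \<and> f x = 1})) / real N) + 11}.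
           count_prob N f (nat \<lceil>sqrt (real N)\<rceil>) y) \<ge> 8 / pi\<^sup>2"
proof -
  note N = assms(1) and f = assms(2)
  define M where "M = nat \<lceil>sqrt (real N)\<rceil>"
  define t where "t = real (card {x. x < N \<and> f x = 1})"
  define th where "th = arcsin (sqrt (t / real N))"
  define B where "B = 2 * pi * sqrt (t * (real N - t) / real N) + 11"
  define G where "G = {y. y < M \<and> \<bar>real_of_int (tt y) - t\<bar> < B}"
  have sN: "sqrt (real N) \<ge> 1" using N by simp
  have rM: "real M = real_of_int \<lceil>sqrt (real N)\<rceil>" unfolding M_def using sN by simp
  have M: "M \<ge> 1" using sN unfolding M_def by linarith
  have sM: "sqrt (real N) \<le> real M" unfolding rM by simp
  have MN: "real N \<le> (real M)\<^sup>2"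
  proof -
    have "(sqrt (real N))\<^sup>2 \<le> (real M)\<^sup>2" using sM sN by (intro power_mono) auto
    then show ?thesis by simp
  qed
  have t0: "0 \<le> t" and tN: "t \<le> real N" unfolding t_def using card_le[of N f] by auto
  have tt3: "\<bar>real_of_int (tt y) - count_output N M y\<bar> \<le> 2 / 3" if "y < M" for y
    using assms(3) that unfolding M_def by blast
  have pi2: "pi\<^sup>2 < 10"
  proof -
    have "pi * pi \<le> 3.1416 * 3.1416" using pi_bounds by (intro mult_mono) auto
    moreover have "(3.1416::real) * 3.1416 < 10" by simp
    ultimately show ?thesis by (simp add: power2_eq_square)
  qed
  have SG: "{y. y < M \<and> (\<exists>k::int. \<bar>real y / real M - w - real_of_int k\<bar> < 1 / real M)} \<subseteq> G"
    if w: "w = th / pi \<or> w = - th / pi" for w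
  proof
    fix y assume "y \<in> {y. y < M \<and> (\<exists>k::int. \<bar>real y / real M - w - real_of_int k\<bar> < 1 / real M)}"
    then obtain k :: int where y: "y < M" and k: "\<bar>real y / real M - w - real_of_int k\<bar> < 1 / real M" by blast
    have e: "\<bar>count_output N M y - t\<bar> \<le> 2 * pi * sqrt (t * (real N - t) / real N) + pi\<^sup>2"
      by (rule err_bound[OF N M MN t0 tN th_def w k])
    have "\<bar>real_of_int (tt y) - t\<bar> \<le> \<bar>real_of_int (tt y) - count_output N M y\<bar> + \<bar>count_output N M y - t\<bar>"
      by linarith
    also have "\<dots> \<le> 2 / 3 + (2 * pi * sqrt (t * (real N - t) / real N) + pi\<^sup>2)" using tt3[OF y] e by linarith
    also have "\<dots> < B" unfolding B_def using pi2 by linarith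
    finally show "y \<in> G" unfolding G_def using y by blast
  qed
  define K1 where "K1 = (\<lambda>y::nat. Kf M (2 * pi * (th / pi - real y / real M)))"
  define K2 where "K2 = (\<lambda>y::nat. Kf M (2 * pi * (- th / pi - real y / real M)))"
  have prob: "count_prob N f M y = K1 y / 2 + K2 y / 2" if "y < M" for y
  proof -
    have "count_prob N f M y = Kf M (2 * th - 2 * pi * real y / real M) / 2 + Kf M (- 2 * th - 2 * pi * real y / real M) / 2"
      unfolding prob_formula[OF N f M that] t_def[symmetric] th_def[symmetric] by (rule prob_Kf[OF M])
    moreover have "2 * pi * (th / pi - real y / real M) = 2 * th - 2 * pi * real y / real M"
      by (simp add: field_simps)
    moreover have "2 * pi * (- th / pi - real y / real M) = - 2 * th - 2 * pi * real y / real M"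
      by (simp add: field_simps)
    ultimately show ?thesis unfolding K1_def K2_def by simp
  qed
  obtain C1 where C1: "C1 \<subseteq> {y. y < M \<and> (\<exists>k::int. \<bar>real y / real M - th / pi - real_of_int k\<bar> < 1 / real M)}"
    "(\<Sum>y\<in>C1. K1 y) \<ge> 8 / pi\<^sup>2"
    using KL[OF M, of "th / pi"] unfolding K1_def by blast
  obtain C2 where C2: "C2 \<subseteq> {y. y < M \<and> (\<exists>k::int. \<bar>real y / real M - (- th / pi) - real_of_int k\<bar> < 1 / real M)}"
    "(\<Sum>y\<in>C2. K2 y) \<ge> 8 / pi\<^sup>2"
    using KL[OF M, of "- th / pi"] unfolding K2_def by blast
  have C1G: "C1 \<subseteq> G" using C1(1) SG[of "th / pi"] by blast
  have C2G: "C2 \<subseteq> G" using C2(1) SG[of "- th / pi"] by blast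
  have finG: "finite G" unfolding G_def by simp
  have "8 / pi\<^sup>2 = (8 / pi\<^sup>2) / 2 + (8 / pi\<^sup>2) / 2" by simp
  also have "\<dots> \<le> (\<Sum>y\<in>C1. K1 y) / 2 + (\<Sum>y\<in>C2. K2 y) / 2" using C1(2) C2(2) by linarith
  also have "\<dots> \<le> (\<Sum>y\<in>G. K1 y) / 2 + (\<Sum>y\<in>G. K2 y) / 2"
  proof -
    have "(\<Sum>y\<in>C1. K1 y) \<le> (\<Sum>y\<in>G. K1 y)"
      using finG C1G by (intro sum_mono2) (auto simp: K1_def Kf_nonneg)
    moreover have "(\<Sum>y\<in>C2. K2 y) \<le> (\<Sum>y\<in>G. K2 y)"
      using finG C2G by (intro sum_mono2) (auto simp: K2_def Kf_nonneg)
    ultimately show ?thesis by linarith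
  qed
  also have "\<dots> = (\<Sum>y\<in>G. count_prob N f M y)"
  proof -
    have "(\<Sum>y\<in>G. count_prob N f M y) = (\<Sum>y\<in>G. K1 y / 2 + K2 y / 2)"
      by (rule sum.cong) (auto simp: G_def prob)
    also have "\<dots> = (\<Sum>y\<in>G. K1 y) / 2 + (\<Sum>y\<in>G. K2 y) / 2"
      by (simp add: sum.distrib sum_divide_distrib)
    finally show ?thesis by simp
  qed
  finally show ?thesis unfolding G_def B_def t_def M_def .
qed

end
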